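(* Let $U\in C^{3}(\mathbb{R}^{d})$ be a Morse function and $\boldsymbol{\ell}$ a $C^{1}$ vector field with $\nabla U\cdot\boldsymbol{\ell}\equiv0$. Let $\boldsymbol{\sigma}$ be a critical point of $U$ such that $\mathbb{H}^{\boldsymbol{\sigma}}=\nabla^{2}U(\boldsymbol{\sigma})$ has exactly one negative eigenvalue $-\lambda^{\boldsymbol{\sigma}}$, and let $-\mu^{\boldsymbol{\sigma}}$ denote the unique negative eigenvalue of $\mathbb{H}^{\boldsymbol{\sigma}}+\mathbb{L}^{\boldsymbol{\sigma}}$, where $\mathbb{L}^{\boldsymbol{\sigma}}=D\boldsymbol{\ell}(\boldsymbol{\sigma})$. Then $\mu^{\boldsymbol{\sigma}}\ge\lambda^{\boldsymbol{\sigma}}$, and consequently $\omega^{\boldsymbol{\sigma}}\ge\omega^{\boldsymbol{\sigma}}_{\mathrm{rev}}$, where $\omega^{\boldsymbol{\sigma}}=\frac{\mu^{\boldsymbol{\sigma}}}{2\pi\sqrt{-\det\mathbb{H}^{\boldsymbol{\sigma}}}}$ and $\omega^{\boldsymbol{\sigma}}_{\mathrm{rev}}=\frac{\lambda^{\boldsymbol{\sigma}}}{2\pi\sqrt{-\det\mathbb{H}^{\boldsymbol{\sigma}}}}$.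
   Context: Under these hypotheses it is known that $\mathbb{H}^{\boldsymbol{\sigma}}+\mathbb{L}^{\boldsymbol{\sigma}}$ is invertible and has exactly one negative eigenvalue, so $\mu^{\boldsymbol{\sigma}}>0$ is well defined. *)

theory Defs
  imports "HOL-Analysis.Analysis"
begin

definition real_eigenvalue :: "real^'n^'n \<Rightarrow> real \<Rightarrow> bool" where
  "real_eigenvalue A c \<longleftrightarrow> (\<exists>v. v \<noteq> 0 \<and> A *v v = c *\<^sub>R v)"

text \<open>Number of negative eigenvalues counted with multiplicity (for a symmetric matrix):
  the dimension of the span of all eigenvectors with negative eigenvalue.\<close>
definition neg_eig_count :: "real^'n^'n \<Rightarrow> nat" where
  "neg_eig_count A = dim (span {v. \<exists>c<0. A *v v = c *\<^sub>R v})"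

end

theory Submission
  imports Defs
begin


lemma line_deriv_real:
  fixes F :: "real^'n \<Rightarrow> real"
  assumes "(F has_derivative D) (at (p + s *\<^sub>R h))"
  shows "((\<lambda>t. F (p + t *\<^sub>R h)) has_real_derivative D h) (at s)"
proof -
  have lin: "linear D" using assms has_derivative_linear by blast
  have "((\<lambda>t. p + t *\<^sub>R h) has_derivative (\<lambda>d. d *\<^sub>R h)) (at s)"
    by (auto intro!: derivative_eq_intros)
  from has_derivative_compose[OF this assms]
  have "((\<lambda>t. F (p + t *\<^sub>R h)) has_derivative (\<lambda>d. D (d *\<^sub>R h))) (at s)" by simp
  moreover have "(\<lambda>d. D (d *\<^sub>R h)) = (*) (D h)"
    using lin by (auto simp: linear_scale)
  ultimately show ?thesis by (simp add: has_field_derivative_def)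
qed

lemma line_deriv_vec:
  fixes F :: "real^'n \<Rightarrow> real^'m"
  assumes "(F has_derivative (\<lambda>v. A *v v)) (at (p + s *\<^sub>R h))"
  shows "((\<lambda>t. F (p + t *\<^sub>R h)) has_vector_derivative (A *v h)) (at s)"
proof -
  have "((\<lambda>t. p + t *\<^sub>R h) has_derivative (\<lambda>d. d *\<^sub>R h)) (at s)"
    by (auto intro!: derivative_eq_intros)
  from has_derivative_compose[OF this assms]
  have "((\<lambda>t. F (p + t *\<^sub>R h)) has_derivative (\<lambda>d. A *v (d *\<^sub>R h))) (at s)" by simp
  then show ?thesis by (simp add: has_vector_derivative_def matrix_vector_mult_scaleR)
qed

lemma quot_lim:
  fixes g :: "real \<Rightarrow> 'a::real_normed_vector"
  assumes "(g has_vector_derivative g') (at 0)" "g 0 = 0"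
  shows "((\<lambda>t. g t /\<^sub>R t) \<longlongrightarrow> g') (at 0)"
proof -
  from assms(1) have "((\<lambda>y. norm (g y - g 0 - y *\<^sub>R g') / norm (y - 0)) \<longlongrightarrow> 0) (at 0)"
    unfolding has_vector_derivative_def has_derivative_iff_norm by auto
  then have "((\<lambda>y. norm (g y /\<^sub>R y - g')) \<longlongrightarrow> 0) (at 0)"
  proof (rule Lim_transform_eventually)
    show "\<forall>\<^sub>F y in at 0. norm (g y - g 0 - y *\<^sub>R g') / norm (y - 0) = norm (g y /\<^sub>R y - g')"
    proof -
      have "norm (g y - g 0 - y *\<^sub>R g') / norm (y - 0) = norm (g y /\<^sub>R y - g')" if "y \<noteq> 0" for y
      proof -
        have "g y /\<^sub>R y - g' = (1/y) *\<^sub>R (g y - y *\<^sub>R g')" using \<open>y \<noteq> 0\<close>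
          by (simp add: scaleR_diff_right inverse_eq_divide)
        then show ?thesis
          using assms(2) by (simp add: divide_simps)
      qed
      then show ?thesis by (auto simp: eventually_at_filter)
    qed
  qed
  then show ?thesis by (simp add: tendsto_norm_zero_iff LIM_zero_iff)
qed

lemma mixed_mvt:
  fixes U :: "real^'n \<Rightarrow> real" and gU :: "real^'n \<Rightarrow> real^'n" and HU :: "real^'n \<Rightarrow> real^'n^'n"
  assumes U_grad: "\<And>x. (U has_derivative (\<lambda>h. gU x \<bullet> h)) (at x)"
    and U_hess: "\<And>x. (gU has_derivative (\<lambda>h. HU x *v h)) (at x)"
    and t: "t > 0"
  shows "\<exists>y. norm (y - x) \<le> t * (norm h + norm k) \<and>
     U (x + t *\<^sub>R h + t *\<^sub>R k) - U (x + t *\<^sub>R h) - U (x + t *\<^sub>R k) + U x = t^2 * ((HU y *v k) \<bullet> h)"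
proof -
  define \<phi> where "\<phi> s = U ((x + t *\<^sub>R k) + s *\<^sub>R h) - U (x + s *\<^sub>R h)" for s
  have d\<phi>: "(\<phi> has_real_derivative (gU ((x + t *\<^sub>R k) + s *\<^sub>R h) \<bullet> h - gU (x + s *\<^sub>R h) \<bullet> h)) (at s)" for s
    unfolding \<phi>_def[abs_def]
    by (intro DERIV_diff line_deriv_real[OF U_grad])
  obtain s1 where s1: "0 < s1" "s1 < t"
    "\<phi> t - \<phi> 0 = (t - 0) * (gU ((x + t *\<^sub>R k) + s1 *\<^sub>R h) \<bullet> h - gU (x + s1 *\<^sub>R h) \<bullet> h)"
    using MVT2[OF t, of \<phi> "\<lambda>s. gU ((x + t *\<^sub>R k) + s *\<^sub>R h) \<bullet> h - gU (x + s *\<^sub>R h) \<bullet> h"] d\<phi> by blast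
  define \<psi> where "\<psi> r = gU ((x + s1 *\<^sub>R h) + r *\<^sub>R k) \<bullet> h" for r
  have d\<psi>: "(\<psi> has_real_derivative ((HU ((x + s1 *\<^sub>R h) + r *\<^sub>R k) *v k) \<bullet> h)) (at r)" for r
    unfolding \<psi>_def[abs_def]
    by (rule line_deriv_real[OF has_derivative_inner_left[OF U_hess]])
  obtain r1 where r1: "0 < r1" "r1 < t"
    "\<psi> t - \<psi> 0 = (t - 0) * ((HU ((x + s1 *\<^sub>R h) + r1 *\<^sub>R k) *v k) \<bullet> h)"
    using MVT2[OF t, of \<psi> "\<lambda>r. (HU ((x + s1 *\<^sub>R h) + r *\<^sub>R k) *v k) \<bullet> h"] d\<psi> by blast
  define y where "y = (x + s1 *\<^sub>R h) + r1 *\<^sub>R k"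
  have "norm (y - x) \<le> norm (s1 *\<^sub>R h) + norm (r1 *\<^sub>R k)"
    unfolding y_def by (metis add_diff_cancel_left' add.assoc norm_triangle_ineq)
  also have "\<dots> = s1 * norm h + r1 * norm k" using s1 r1 by simp
  also have "\<dots> \<le> t * norm h + t * norm k"
    using s1 r1 by (intro add_mono mult_right_mono) auto
  finally have ny: "norm (y - x) \<le> t * (norm h + norm k)" by (simp add: algebra_simps)
  have "\<psi> t = gU ((x + t *\<^sub>R k) + s1 *\<^sub>R h) \<bullet> h" "\<psi> 0 = gU (x + s1 *\<^sub>R h) \<bullet> h"
    unfolding \<psi>_def by (simp_all add: add_ac)
  then have "\<phi> t - \<phi> 0 = t^2 * ((HU y *v k) \<bullet> h)"
    using s1(3) r1(3) unfolding y_def by (simp add: power2_eq_square)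
  moreover have "\<phi> t - \<phi> 0 = U (x + t *\<^sub>R h + t *\<^sub>R k) - U (x + t *\<^sub>R h) - U (x + t *\<^sub>R k) + U x"
    unfolding \<phi>_def by (simp add: add_ac)
  ultimately show ?thesis using ny by metis
qed

lemma cont_bilin:
  fixes M :: "'a::t2_space \<Rightarrow> real^'n^'m"
  assumes "continuous F M"
  shows "continuous F (\<lambda>y. (M y *v k) \<bullet> h)"
  unfolding matrix_vector_mult_def inner_vec_def
  by (simp, intro continuous_intros continuous_component assms)

lemma hess_sym:
  fixes U :: "real^'n \<Rightarrow> real" and gU :: "real^'n \<Rightarrow> real^'n" and HU :: "real^'n \<Rightarrow> real^'n^'n"
  assumes U_grad: "\<And>x. (U has_derivative (\<lambda>h. gU x \<bullet> h)) (at x)"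
    and U_hess: "\<And>x. (gU has_derivative (\<lambda>h. HU x *v h)) (at x)"
    and U_third: "\<And>x. (HU has_derivative D3U x) (at x)"
  shows "(HU x *v k) \<bullet> h = (HU x *v h) \<bullet> k"
proof (rule ccontr)
  define a where "a = (HU x *v k) \<bullet> h"
  define b where "b = (HU x *v h) \<bullet> k"
  assume "(HU x *v k) \<bullet> h \<noteq> (HU x *v h) \<bullet> k"
  then have ne: "a \<noteq> b" unfolding a_def b_def .
  define e where "e = \<bar>a - b\<bar> / 2"
  have e: "e > 0" using ne unfolding e_def by simp
  have cH: "continuous (at x) HU" using U_third has_derivative_continuous by blast
  have cF: "continuous (at x) (\<lambda>y. (HU y *v k) \<bullet> h)" by (rule cont_bilin[OF cH])
  have cG: "continuous (at x) (\<lambda>y. (HU y *v h) \<bullet> k)" by (rule cont_bilin[OF cH])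
  obtain d1 where d1: "d1 > 0" "\<And>y. dist y x < d1 \<Longrightarrow> dist ((HU y *v k) \<bullet> h) a < e"
    using cF e unfolding continuous_at_eps_delta a_def by blast
  obtain d2 where d2: "d2 > 0" "\<And>y. dist y x < d2 \<Longrightarrow> dist ((HU y *v h) \<bullet> k) b < e"
    using cG e unfolding continuous_at_eps_delta b_def by blast
  define d where "d = min d1 d2"
  define t where "t = d / (2 * (norm h + norm k + 1))"
  have d: "d > 0" using d1 d2 unfolding d_def by simp
  have pos: "norm h + norm k + 1 > 0" by (smt (verit) norm_ge_zero)
  have t: "t > 0" unfolding t_def using d pos by simp
  have "t * (norm h + norm k) \<le> t * (norm h + norm k + 1)" using t by simp
  also have "\<dots> = d / 2" unfolding t_def using pos by (simp add: field_simps)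
  also have "\<dots> < d" using d by simp
  finally have td: "t * (norm h + norm k) < d" .
  obtain y1 where y1: "norm (y1 - x) \<le> t * (norm h + norm k)"
    "U (x + t *\<^sub>R h + t *\<^sub>R k) - U (x + t *\<^sub>R h) - U (x + t *\<^sub>R k) + U x = t^2 * ((HU y1 *v k) \<bullet> h)"
    using mixed_mvt[OF U_grad U_hess t, of x h k] by blast
  obtain y2 where y2: "norm (y2 - x) \<le> t * (norm k + norm h)"
    "U (x + t *\<^sub>R k + t *\<^sub>R h) - U (x + t *\<^sub>R k) - U (x + t *\<^sub>R h) + U x = t^2 * ((HU y2 *v h) \<bullet> k)"
    using mixed_mvt[OF U_grad U_hess t, of x k h] by blast
  have "t^2 * ((HU y1 *v k) \<bullet> h) = t^2 * ((HU y2 *v h) \<bullet> k)"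
  proof -
    have "U (x + t *\<^sub>R k + t *\<^sub>R h) = U (x + t *\<^sub>R h + t *\<^sub>R k)" by (simp add: add_ac)
    then show ?thesis using y1(2) y2(2) by linarith
  qed
  then have eq: "(HU y1 *v k) \<bullet> h = (HU y2 *v h) \<bullet> k" using t by simp
  have "dist y1 x < d1" using y1(1) td unfolding d_def by (simp add: dist_norm)
  then have 1: "dist ((HU y1 *v k) \<bullet> h) a < e" by (rule d1(2))
  have "dist y2 x < d2" using y2(1) td unfolding d_def by (simp add: dist_norm add.commute)
  then have 2: "dist ((HU y2 *v h) \<bullet> k) b < e" by (rule d2(2))
  from 1 2 eq have "\<bar>a - b\<bar> < 2 * e" by (simp add: dist_real_def)
  then show False unfolding e_def by simp
qed

lemma lim_zero_fun:
  fixes c :: real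
  assumes "((\<lambda>t::real. 0) \<longlongrightarrow> c) (at 0)"
  shows "c = 0"
  using tendsto_unique[OF at_neq_bot assms tendsto_const] by simp

lemma first_second:
  fixes gU :: "real^'n \<Rightarrow> real^'n" and HU :: "real^'n \<Rightarrow> real^'n^'n"
    and l :: "real^'n \<Rightarrow> real^'n" and Dl :: "real^'n \<Rightarrow> real^'n^'n"
  assumes U_hess: "\<And>x. (gU has_derivative (\<lambda>h. HU x *v h)) (at x)"
    and l_deriv: "\<And>x. (l has_derivative (\<lambda>h. Dl x *v h)) (at x)"
    and orth: "\<And>x. gU x \<bullet> l x = 0"
    and crit: "gU \<sigma> = 0"
    and inv: "\<And>x. HU \<sigma> *v x = 0 \<Longrightarrow> x = 0"
    and sym: "\<And>h k. (HU \<sigma> *v k) \<bullet> h = (HU \<sigma> *v h) \<bullet> k"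
  shows "l \<sigma> = 0" "(HU \<sigma> *v h) \<bullet> (Dl \<sigma> *v h) = 0"
proof -
  have gd: "((\<lambda>t. gU (\<sigma> + t *\<^sub>R h)) has_vector_derivative (HU \<sigma> *v h)) (at 0)" for h
    using line_deriv_vec[of gU "HU \<sigma>" \<sigma> 0 h] U_hess by simp
  have gq: "((\<lambda>t. gU (\<sigma> + t *\<^sub>R h) /\<^sub>R t) \<longlongrightarrow> HU \<sigma> *v h) (at 0)" for h
    by (rule quot_lim[OF gd]) (simp add: crit)
  have lc: "continuous (at \<sigma>) l" using l_deriv has_derivative_continuous by blast
  have ml: "((\<lambda>t. l (\<sigma> + t *\<^sub>R h)) \<longlongrightarrow> l \<sigma>) (at 0)" for h
  proof -
    have "((\<lambda>t. \<sigma> + t *\<^sub>R h) \<longlongrightarrow> \<sigma>) (at (0::real))"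
      by (auto intro!: tendsto_eq_intros)
    from isCont_tendsto_compose[OF lc this] show ?thesis by simp
  qed
  have z1: "(\<lambda>t. (gU (\<sigma> + t *\<^sub>R h) /\<^sub>R t) \<bullet> l (\<sigma> + t *\<^sub>R h)) = (\<lambda>t. 0)" for h
    by (simp add: orth)
  have "((\<lambda>t. (gU (\<sigma> + t *\<^sub>R h) /\<^sub>R t) \<bullet> l (\<sigma> + t *\<^sub>R h)) \<longlongrightarrow> (HU \<sigma> *v h) \<bullet> l \<sigma>) (at 0)" for h
    by (intro tendsto_inner gq ml)
  then have o1: "(HU \<sigma> *v h) \<bullet> l \<sigma> = 0" for h
    unfolding z1 by (rule lim_zero_fun)
  have "(HU \<sigma> *v l \<sigma>) \<bullet> (HU \<sigma> *v l \<sigma>) = 0"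
    using o1[of "HU \<sigma> *v l \<sigma>"] sym[of "l \<sigma>" "HU \<sigma> *v l \<sigma>"] by simp
  then show l0: "l \<sigma> = 0" using inv by simp
  have ld: "((\<lambda>t. l (\<sigma> + t *\<^sub>R h)) has_vector_derivative (Dl \<sigma> *v h)) (at 0)"
    using line_deriv_vec[of l "Dl \<sigma>" \<sigma> 0 h] l_deriv by simp
  have lq: "((\<lambda>t. l (\<sigma> + t *\<^sub>R h) /\<^sub>R t) \<longlongrightarrow> Dl \<sigma> *v h) (at 0)"
    by (rule quot_lim[OF ld]) (simp add: l0)
  have z2: "(\<lambda>t. (gU (\<sigma> + t *\<^sub>R h) /\<^sub>R t) \<bullet> (l (\<sigma> + t *\<^sub>R h) /\<^sub>R t)) = (\<lambda>t. 0)"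
    by (simp add: orth)
  have "((\<lambda>t. (gU (\<sigma> + t *\<^sub>R h) /\<^sub>R t) \<bullet> (l (\<sigma> + t *\<^sub>R h) /\<^sub>R t)) \<longlongrightarrow> (HU \<sigma> *v h) \<bullet> (Dl \<sigma> *v h)) (at 0)"
    by (intro tendsto_inner gq lq)
  then show "(HU \<sigma> *v h) \<bullet> (Dl \<sigma> *v h) = 0"
    unfolding z2 by (rule lim_zero_fun)
qed

lemma quad0: fixes a b :: real assumes "\<And>s. a * s + b * s^2 \<ge> 0" shows "a = 0"
proof (rule ccontr)
  assume a: "a \<noteq> 0"
  define c where "c = \<bar>b\<bar> + 1"
  have c: "c > 0" "\<bar>b\<bar> < c" unfolding c_def by auto
  have "a * (-a/c) + b * (-a/c)^2 = (b * a^2 - c * a^2) / c^2"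
    using c by (simp add: field_simps power2_eq_square)
  also have "\<dots> < 0"
  proof -
    have "b * a^2 < c * a^2" using c a by (intro mult_strict_right_mono) (auto simp: abs_less_iff)
    then show ?thesis using c by (simp add: divide_neg_pos algebra_simps)
  qed
  finally show False using assms[of "-a/c"] by simp
qed

lemma pos_on_perp:
  fixes H :: "real^'n^'n"
  assumes sym: "\<And>h k. (H *v k) \<bullet> h = (H *v h) \<bullet> k"
    and inv: "\<And>x. H *v x = 0 \<Longrightarrow> x = 0"
    and idx: "neg_eig_count H = 1"
    and e: "e \<noteq> 0" "H *v e = (- lam) *\<^sub>R e" "lam > 0"
    and u: "u \<bullet> e = 0" "u \<noteq> 0"
  shows "u \<bullet> (H *v u) > 0"
proof (rule ccontr)
  assume "\<not> ?thesis"
  then have qu: "u \<bullet> (H *v u) \<le> 0" by simp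
  define S where "S = sphere 0 1 \<inter> {x. e \<bullet> x = 0}"
  have cS: "compact S" unfolding S_def by (intro compact_Int_closed compact_sphere closed_hyperplane)
  define u1 where "u1 = u /\<^sub>R norm u"
  have u1S: "u1 \<in> S" unfolding S_def u1_def using u by (simp add: inner_commute)
  have cq: "continuous_on S (\<lambda>x. x \<bullet> (H *v x))"
    by (intro continuous_on_inner continuous_on_id matrix_vector_mult_linear_continuous_on[unfolded eta_contract_eq])
  obtain x0 where x0: "x0 \<in> S" "\<And>y. y \<in> S \<Longrightarrow> x0 \<bullet> (H *v x0) \<le> y \<bullet> (H *v y)"
    using continuous_attains_inf[OF cS _ cq] u1S by blast
  define m where "m = x0 \<bullet> (H *v x0)"
  have x0n: "norm x0 = 1" "x0 \<bullet> e = 0" using x0(1) unfolding S_def by (auto simp: inner_commute)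
  have x0x0: "x0 \<bullet> x0 = 1" using x0n by (simp add: dot_square_norm)
  have "m \<le> u1 \<bullet> (H *v u1)" unfolding m_def using x0(2)[OF u1S] .
  also have "\<dots> = (u \<bullet> (H *v u)) / (norm u)^2"
    unfolding u1_def by (simp add: matrix_vector_mult_scaleR power2_eq_square divide_inverse mult_ac)
  also have "\<dots> \<le> 0" using qu by (simp add: divide_nonpos_nonneg)
  finally have m0: "m \<le> 0" .
  have key: "y \<bullet> (H *v y) \<ge> m * (y \<bullet> y)" if "y \<bullet> e = 0" for y
  proof (cases "y = 0")
    case True then show ?thesis by simp
  next
    case False
    define y1 where "y1 = y /\<^sub>R norm y"
    have "y1 \<in> S" unfolding S_def y1_def using False that by (simp add: inner_commute)
    then have "m \<le> y1 \<bullet> (H *v y1)" unfolding m_def using x0(2) by blast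
    also have "\<dots> = (y \<bullet> (H *v y)) / (norm y)^2"
      unfolding y1_def by (simp add: matrix_vector_mult_scaleR power2_eq_square divide_inverse mult_ac)
    finally have "m * (norm y)^2 \<le> y \<bullet> (H *v y)" using False by (simp add: field_simps)
    then show ?thesis by (simp add: dot_square_norm)
  qed
  define r where "r = H *v x0 - m *\<^sub>R x0"
  have re: "r \<bullet> e = 0"
  proof -
    have "(H *v x0) \<bullet> e = (H *v e) \<bullet> x0" using sym by simp
    then show ?thesis unfolding r_def using e x0n by (simp add: inner_diff_left inner_diff_right inner_commute)
  qed
  have "(2 * (r \<bullet> r)) * s + (r \<bullet> (H *v r) - m * (r \<bullet> r)) * s^2 \<ge> 0" for s
  proof -
    have "(x0 + s *\<^sub>R r) \<bullet> e = 0" using re x0n by (simp add: inner_add_left)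
    then have k: "(x0 + s *\<^sub>R r) \<bullet> (H *v (x0 + s *\<^sub>R r)) \<ge> m * ((x0 + s *\<^sub>R r) \<bullet> (x0 + s *\<^sub>R r))"
      by (rule key)
    have hs: "x0 \<bullet> (H *v r) = r \<bullet> (H *v x0)" using sym[of x0 r] sym[of r x0] by (simp add: inner_commute)
    have "(x0 + s *\<^sub>R r) \<bullet> (H *v (x0 + s *\<^sub>R r)) = m + 2 * s * (r \<bullet> (H *v x0)) + s^2 * (r \<bullet> (H *v r))"
      unfolding m_def using hs
      by (simp add: matrix_vector_right_distrib matrix_vector_mult_scaleR inner_add_left inner_add_right
          power2_eq_square algebra_simps)
    moreover have "(x0 + s *\<^sub>R r) \<bullet> (x0 + s *\<^sub>R r) = 1 + 2 * s * (x0 \<bullet> r) + s^2 * (r \<bullet> r)"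
      using x0x0 by (simp add: inner_add_left inner_add_right inner_commute power2_eq_square algebra_simps)
    moreover have "r \<bullet> (H *v x0) - m * (x0 \<bullet> r) = r \<bullet> r"
      unfolding r_def by (simp add: inner_diff_left inner_diff_right inner_commute algebra_simps)
    ultimately show ?thesis using k by (simp add: algebra_simps power2_eq_square) 
  qed
  then have "2 * (r \<bullet> r) = 0" by (rule quad0)
  then have "r = 0" by simp
  then have Hx0: "H *v x0 = m *\<^sub>R x0" unfolding r_def by simp
  show False
  proof (cases "m = 0")
    case True
    then have "x0 = 0" using Hx0 inv by simp
    then show False using x0n by simp
  next
    case False
    then have mneg: "m < 0" using m0 by simp
    let ?N = "{v. \<exists>c<0. H *v v = c *\<^sub>R v}"
    have sub: "{e, x0} \<subseteq> span ?N"
    proof -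
      have "e \<in> ?N" using e by (intro CollectI exI[of _ "-lam"]) simp
      moreover have "x0 \<in> ?N" using mneg Hx0 by (intro CollectI exI[of _ m]) simp
      ultimately have "{e, x0} \<subseteq> ?N" by simp
      then show ?thesis using span_superset by (rule subset_trans)
    qed
    have ind: "independent {e, x0}"
      using e x0n by (intro pairwise_orthogonal_independent) (auto simp: pairwise_def orthogonal_def inner_commute)
    have "e \<noteq> x0" using e x0n by auto
    then have "card {e, x0} = 2" by simp
    with independent_card_le_dim[OF sub ind] have "2 \<le> neg_eig_count H"
      unfolding neg_eig_count_def by simp
    then show False using idx by simp
  qed
qed

lemma alg: fixes e X u :: "'a::real_inner" assumes "X \<bullet> e = 0" "u \<bullet> e = 0"
  shows "((c *\<^sub>R e + X) \<bullet> (c *\<^sub>R e + X)) + lam * ((a *\<^sub>R e + u) \<bullet> (c *\<^sub>R e + X)) = X \<bullet> X + lam * (u \<bullet> X) + (c*c + lam*a*c) * (e \<bullet> e)"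
proof -
  have "e \<bullet> X = 0" "e \<bullet> u = 0" using assms by (simp_all add: inner_commute)
  then have "(c *\<^sub>R e + X) \<bullet> (c *\<^sub>R e + X) = c*c*(e \<bullet> e) + X \<bullet> X"
     "(a *\<^sub>R e + u) \<bullet> (c *\<^sub>R e + X) = a*c*(e \<bullet> e) + u \<bullet> X"
    using assms by (simp_all only: inner_add_left inner_add_right inner_scaleR_left inner_scaleR_right, simp_all)
  then show ?thesis by (simp only:) (simp add: distrib_left distrib_right)
qed
lemma fin: fixes P s lam mu :: real assumes "P = - mu * s" "P > 0" "mu > 0" "P + lam * s \<ge> 0" shows "mu \<ge> lam"
proof -
  have s: "s < 0"
  proof (rule ccontr)
    assume "\<not> s < 0"
    then have "mu * s \<ge> 0" using assms(3) by simp
    then show False using assms(1,2) by linarith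
  qed
  have "(lam - mu) * s \<ge> 0" using assms(1,4) by (simp add: algebra_simps)
  show ?thesis
  proof (rule ccontr)
    assume "\<not> mu \<ge> lam"
    then have "(lam - mu) * s < 0" using s by (simp add: mult_pos_neg)
    then show False using \<open>(lam - mu) * s \<ge> 0\<close> by linarith
  qed
qed

lemma mu_ge:
  fixes H L :: "real^'n^'n"
  assumes sym: "\<And>h k. (H *v k) \<bullet> h = (H *v h) \<bullet> k"
    and inv: "\<And>x. H *v x = 0 \<Longrightarrow> x = 0"
    and pos: "\<And>u. u \<bullet> e = 0 \<Longrightarrow> u \<noteq> 0 \<Longrightarrow> u \<bullet> (H *v u) > 0"
    and e: "e \<noteq> 0" "H *v e = (- lam) *\<^sub>R e" "lam > 0"
    and skew: "\<And>h. (H *v h) \<bullet> (L *v h) = 0"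
    and v: "v \<noteq> 0" "(H + L) *v v = (- mu) *\<^sub>R v" and mu: "mu > 0"
  shows "mu \<ge> lam"
proof -
  define s where "s = v \<bullet> (H *v v)"
  define P where "P = (H *v v) \<bullet> (H *v v)"
  have "(H *v v) \<bullet> ((H + L) *v v) = P"
    unfolding P_def by (simp add: matrix_vector_mult_add_rdistrib inner_add_right skew)
  then have Ps: "P = - mu * s" using v(2) unfolding s_def by (simp add: inner_commute)
  have "H *v v \<noteq> 0" using inv v(1) by blast
  then have Ppos: "P > 0" unfolding P_def by simp
  define a where "a = (v \<bullet> e) / (e \<bullet> e)"
  define u where "u = v - a *\<^sub>R e"
  have ue: "u \<bullet> e = 0" unfolding u_def a_def using e(1) by (simp add: inner_diff_left)
  have Hue: "(H *v u) \<bullet> e = 0" using sym[of e u] e(2) ue by (simp add: inner_commute)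
  have vdec: "v = a *\<^sub>R e + u" unfolding u_def by simp
  have Hv: "H *v v = (- lam * a) *\<^sub>R e + H *v u"
    unfolding vdec by (simp add: matrix_vector_right_distrib matrix_vector_mult_scaleR e(2))
  have "P + lam * s = (H *v u) \<bullet> (H *v u) + lam * (u \<bullet> (H *v u)) + ((- lam * a) * (- lam * a) + lam * a * (- lam * a)) * (e \<bullet> e)"
    apply (unfold P_def s_def Hv)
    apply (subst (1) vdec)
    by (rule alg[OF Hue ue])
  then have Pl: "P + lam * s = (H *v u) \<bullet> (H *v u) + lam * (u \<bullet> (H *v u))"
    by (simp add: algebra_simps)
  have "u \<bullet> (H *v u) \<ge> 0"
  proof (cases "u = 0")
    case False then show ?thesis using pos[OF ue] by (simp add: less_imp_le)
  qed simp
  then have "P + lam * s \<ge> 0" unfolding Pl using e(3) by (intro add_nonneg_nonneg inner_ge_zero mult_nonneg_nonneg) auto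
  then show ?thesis using fin[OF Ps Ppos mu] by simp
qed

definition reflm :: "real^'n \<Rightarrow> real^'n^'n" where
  "reflm f = (\<chi> i k. (if i = k then 1 else 0) - 2 * f$i * f$k / (f \<bullet> f))"

lemma reflm_mult: "reflm f *v x = x - (2 * (f \<bullet> x) / (f \<bullet> f)) *\<^sub>R f"
proof -
  have "(reflm f *v x)$i = x$i - (2 * (f \<bullet> x) / (f \<bullet> f)) * f$i" for i
  proof -
    have "(reflm f *v x)$i = (\<Sum>k\<in>UNIV. (if i = k then x$k else 0) - (2 * f$i / (f \<bullet> f)) * (f$k * x$k))"
      unfolding reflm_def matrix_vector_mult_def by (auto intro!: sum.cong simp: algebra_simps)
    also have "\<dots> = x$i - (2 * f$i / (f \<bullet> f)) * (f \<bullet> x)"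
      by (simp add: sum_subtractf sum_distrib_left[symmetric] inner_vec_def sum_divide_distrib[symmetric])
    finally show ?thesis by simp
  qed
  then show ?thesis by (simp add: vec_eq_iff)
qed

lemma reflm_inv: assumes "f \<noteq> 0" shows "reflm f *v (reflm f *v x) = x"
proof -
  have ff: "f \<bullet> f \<noteq> 0" using assms by simp
  have "f \<bullet> (reflm f *v x) = - (f \<bullet> x)"
    using ff by (simp add: reflm_mult inner_diff_right)
  then show ?thesis using ff by (simp add: reflm_mult[of f "reflm f *v x"]) (simp add: reflm_mult)
qed

lemma det_nz_ker:
  fixes A :: "real^'n^'n"
  assumes "\<And>x. A *v x = 0 \<Longrightarrow> x = 0" shows "det A \<noteq> 0"
  using assms by (simp add: invertible_det_nz[symmetric] invertible_left_inverse matrix_left_invertible_ker)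

lemma det_reflm_nz: "f \<noteq> 0 \<Longrightarrow> det (reflm f) \<noteq> 0"
  by (rule det_nz_ker) (metis reflm_inv matrix_vector_mult_0_right)

lemma cont_det:
  fixes A :: "real \<Rightarrow> real^'n^'n"
  assumes "\<And>i j. continuous_on S (\<lambda>t. A t $ i $ j)" shows "continuous_on S (\<lambda>t. det (A t))"
  unfolding det_def by (intro continuous_intros assms)

lemma ivt_sign:
  fixes g :: "real \<Rightarrow> real"
  assumes "continuous_on {0..1} g" "\<And>t. t \<in> {0..1} \<Longrightarrow> g t \<noteq> 0"
  shows "g 0 > 0 \<longleftrightarrow> g 1 > 0"
proof
  assume "g 0 > 0" show "g 1 > 0"
  proof (rule ccontr)
    assume "\<not> g 1 > 0"
    then obtain x where "x \<ge> 0" "x \<le> 1" "g x = 0"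
      using IVT2'[of g 1 0 0] assms(1) \<open>g 0 > 0\<close> by force
    then show False using assms(2) by auto
  qed
next
  assume "g 1 > 0" show "g 0 > 0"
  proof (rule ccontr)
    assume "\<not> g 0 > 0"
    then obtain x where "x \<ge> 0" "x \<le> 1" "g x = 0"
      using IVT'[of g 0 0 1] assms(1) \<open>g 1 > 0\<close> by force
    then show False using assms(2) by auto
  qed
qed

lemma det_reflm_axis:
  assumes "c \<noteq> 0" shows "det (reflm (c *\<^sub>R axis j (1::real))) = -1"
proof -
  have ent: "reflm (c *\<^sub>R axis j 1) $ i $ k = (if i = k then (if i = j then -1 else 1) else 0)" for i k
  proof -
    have "(c *\<^sub>R axis j 1) \<bullet> (c *\<^sub>R axis j (1::real)) = c * c" by (simp add: inner_axis_axis)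
    then show ?thesis using assms by (auto simp: reflm_def axis_def)
  qed
  have "det (reflm (c *\<^sub>R axis j (1::real))) = (\<Prod>i\<in>UNIV. reflm (c *\<^sub>R axis j 1) $ i $ i)"
    by (rule det_diagonal) (simp add: ent)
  also have "\<dots> = (\<Prod>i\<in>UNIV. if i = j then -1 else 1)" by (simp add: ent)
  also have "\<dots> = -1" by (simp add: prod.delta)
  finally show ?thesis .
qed


lemma det_neg:
  fixes H :: "real^'n^'n"
  assumes sym: "\<And>h k. (H *v k) \<bullet> h = (H *v h) \<bullet> k"
    and inv: "\<And>x. H *v x = 0 \<Longrightarrow> x = 0"
    and pos: "\<And>u. u \<bullet> e = 0 \<Longrightarrow> u \<noteq> 0 \<Longrightarrow> u \<bullet> (H *v u) > 0"
    and e: "e \<noteq> 0" "H *v e = (- lam) *\<^sub>R e" "lam > 0"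
  shows "det H < 0"
proof -
  define A where "A t = (1 - t) *\<^sub>R reflm e + t *\<^sub>R H" for t :: real
  have ee: "e \<bullet> e \<noteq> 0" using e by simp
  have Ax: "A t *v x = (1 - t) *\<^sub>R (reflm e *v x) + t *\<^sub>R (H *v x)" for t x
    unfolding A_def by (simp add: matrix_vector_mult_add_rdistrib scaleR_matrix_vector_assoc)
  have Ainv: "A t *v x = 0 \<Longrightarrow> x = 0" if t: "t \<in> {0..1}" for t x
  proof -
    assume A0: "A t *v x = 0"
    have re: "(reflm e *v x) \<bullet> e = - (x \<bullet> e)"
    proof -
      have "e \<bullet> (reflm e *v x) = e \<bullet> x - 2 * (e \<bullet> x)"
        using ee by (simp add: reflm_mult inner_diff_right)
      then show ?thesis by (simp add: inner_commute)
    qed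
    have he: "(H *v x) \<bullet> e = - lam * (x \<bullet> e)" using sym[of e x] e(2) by (simp add: inner_commute)
    have "(A t *v x) \<bullet> e = - ((1 - t) + t * lam) * (x \<bullet> e)"
      unfolding Ax by (simp add: inner_add_left re he algebra_simps)
    moreover have "(1 - t) + t * lam > 0"
    proof (cases "t = 0")
      case False then have "t * lam > 0" using t e(3) by simp
      then show ?thesis using t by simp
    qed simp
    ultimately have xe: "x \<bullet> e = 0" using A0 by simp
    then have rx: "reflm e *v x = x" by (simp add: reflm_mult inner_commute)
    show "x = 0"
    proof (rule ccontr)
      assume "x \<noteq> 0"
      then have p1: "x \<bullet> (H *v x) > 0" and p2: "x \<bullet> x > 0" using pos[OF xe] by auto
      have "(A t *v x) \<bullet> x = (1 - t) * (x \<bullet> x) + t * (x \<bullet> (H *v x))"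
        unfolding Ax rx by (simp add: inner_add_left inner_commute[of "H *v x" x])
      moreover have "(1 - t) * (x \<bullet> x) + t * (x \<bullet> (H *v x)) > 0"
      proof (cases "t = 0")
        case True then show ?thesis using p2 by simp
      next
        case False
        then have "t * (x \<bullet> (H *v x)) > 0" using t p1 by simp
        moreover have "(1 - t) * (x \<bullet> x) \<ge> 0" using t p2 by simp
        ultimately show ?thesis by simp
      qed
      ultimately show False using A0 by simp
    qed
  qed
  have c1: "continuous_on {0..1} (\<lambda>t. det (A t))"
    by (rule cont_det) (simp add: A_def, intro continuous_intros)
  have s1: "det (A 0) > 0 \<longleftrightarrow> det (A 1) > 0"
    by (rule ivt_sign[OF c1]) (rule det_nz_ker, rule Ainv)
  have A01: "A 0 = reflm e" "A 1 = H" unfolding A_def by simp_all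
  obtain j where j: "e $ j \<noteq> 0" using e(1) by (metis vec_eq_iff zero_index)
  define f where "f t = (1 - t) *\<^sub>R e + t *\<^sub>R (e $ j *\<^sub>R axis j 1)" for t :: real
  have fj: "f t $ j = e $ j" for t unfolding f_def by (simp add: axis_def algebra_simps)
  have fnz: "f t \<noteq> 0" for t using fj[of t] j by auto
  have ffnz: "f t \<bullet> f t \<noteq> 0" for t using fnz[of t] by simp
  have cf: "continuous_on {0..1} (\<lambda>t. f t $ i)" for i unfolding f_def by (intro continuous_intros)
  have cff: "continuous_on {0..1} (\<lambda>t. f t \<bullet> f t)" unfolding f_def by (intro continuous_intros)
  have c2: "continuous_on {0..1} (\<lambda>t. det (reflm (f t)))"
  proof (rule cont_det)
    fix i k
    show "continuous_on {0..1} (\<lambda>t. reflm (f t) $ i $ k)"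
    proof -
      have eq: "(\<lambda>t. reflm (f t) $ i $ k) = (\<lambda>t. (if i = k then 1 else 0) - 2 * f t $ i * f t $ k / (f t \<bullet> f t))"
        by (simp add: reflm_def)
      show ?thesis unfolding eq
        by (intro continuous_on_diff continuous_on_const continuous_on_divide continuous_on_mult cf cff) (use ffnz in auto)
    qed
  qed
  have s2: "det (reflm (f 0)) > 0 \<longleftrightarrow> det (reflm (f 1)) > 0"
    by (rule ivt_sign[OF c2]) (rule det_reflm_nz[OF fnz])
  have f01: "f 0 = e" "f 1 = e $ j *\<^sub>R axis j 1" unfolding f_def by simp_all
  have "det (reflm (f 1)) = -1" unfolding f01 by (rule det_reflm_axis[OF j])
  then have "\<not> det (reflm e) > 0" using s2 f01 by simp
  then have "\<not> det H > 0" using s1 A01 by simp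
  moreover have "det H \<noteq> 0" by (rule det_nz_ker[OF inv])
  ultimately show ?thesis by simp
qed

theorem lemma3p4:
  fixes U :: "real^'n \<Rightarrow> real"
    and gU :: "real^'n \<Rightarrow> real^'n"
    and HU :: "real^'n \<Rightarrow> real^'n^'n"
    and D3U :: "real^'n \<Rightarrow> real^'n \<Rightarrow> real^'n^'n"
    and l :: "real^'n \<Rightarrow> real^'n"
    and Dl :: "real^'n \<Rightarrow> real^'n^'n"
    and \<sigma> :: "real^'n"
    and lam \<mu> :: real
  assumes U_grad: "\<And>x. (U has_derivative (\<lambda>h. gU x \<bullet> h)) (at x)"
    and U_hess: "\<And>x. (gU has_derivative (\<lambda>h. HU x *v h)) (at x)"
    and U_third: "\<And>x. (HU has_derivative D3U x) (at x)"
    and U_C3: "\<And>h. continuous_on UNIV (\<lambda>x. D3U x h)"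
    and Morse: "\<And>x. gU x = 0 \<Longrightarrow> invertible (HU x)"
    and l_deriv: "\<And>x. (l has_derivative (\<lambda>h. Dl x *v h)) (at x)"
    and l_C1: "continuous_on UNIV Dl"
    and orth: "\<And>x. gU x \<bullet> l x = 0"
    and crit: "gU \<sigma> = 0"
    and index1: "neg_eig_count (HU \<sigma>) = 1"
    and lam_pos: "lam > 0"
    and lam_eig: "real_eigenvalue (HU \<sigma>) (- lam)"
    and mu_pos: "\<mu> > 0"
    and mu_eig: "real_eigenvalue (HU \<sigma> + Dl \<sigma>) (- \<mu>)"
    and mu_unique: "\<And>c. c < 0 \<Longrightarrow> real_eigenvalue (HU \<sigma> + Dl \<sigma>) c \<Longrightarrow> c = - \<mu>"
  shows "\<mu> \<ge> lam \<and>
    \<mu> / (2 * pi * sqrt (- det (HU \<sigma>))) \<ge> lam / (2 * pi * sqrt (- det (HU \<sigma>)))"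
proof -
  have inv: "\<And>x. HU \<sigma> *v x = 0 \<Longrightarrow> x = 0"
    using Morse[OF crit] by (simp add: invertible_left_inverse matrix_left_invertible_ker)
  have sym: "\<And>h k. (HU \<sigma> *v k) \<bullet> h = (HU \<sigma> *v h) \<bullet> k"
    by (rule hess_sym[OF U_grad U_hess U_third])
  have skew: "\<And>h. (HU \<sigma> *v h) \<bullet> (Dl \<sigma> *v h) = 0"
    by (rule first_second(2)[OF U_hess l_deriv orth crit inv sym])
  obtain e where e: "e \<noteq> 0" "HU \<sigma> *v e = (- lam) *\<^sub>R e"
    using lam_eig unfolding real_eigenvalue_def by blast
  have pos: "\<And>u. u \<bullet> e = 0 \<Longrightarrow> u \<noteq> 0 \<Longrightarrow> u \<bullet> (HU \<sigma> *v u) > 0"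
    by (rule pos_on_perp[OF sym inv index1 e(1) e(2) lam_pos])
  obtain v where v: "v \<noteq> 0" "(HU \<sigma> + Dl \<sigma>) *v v = (- \<mu>) *\<^sub>R v"
    using mu_eig unfolding real_eigenvalue_def by blast
  have ml: "\<mu> \<ge> lam" by (rule mu_ge[OF sym inv pos e lam_pos skew v mu_pos])
  have "det (HU \<sigma>) < 0" by (rule det_neg[OF sym inv pos e lam_pos])
  then have "2 * pi * sqrt (- det (HU \<sigma>)) > 0" by simp
  then show ?thesis using ml by (simp add: divide_right_mono)
qed

end
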